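(* Consider the Markov jump linear system $x_{t+1}=A_{\theta_t}x_t+B_{\theta_t}u_t$, $y_t=C_{\theta_t}x_t$ with modes in $W=\{1,\dots,n_\theta\}$. Let $N\in\mathbb{N}_+$ and $\alpha,\omega\in\mathbb{N}$ with $\alpha+\omega<N$. If the system is $(N,\alpha,\omega)$-mode observable, then it is also $(N+1,\alpha,\omega)$-mode observable.
   Context: Here $A_i\in\mathbb{R}^{n_x\times n_x}$, $B_i\in\mathbb{R}^{n_x\times n_u}$, $C_i\in\mathbb{R}^{n_y\times n_x}$ for $i\in W$. For $\theta=(\theta_0,\dots,\theta_T)\in W^{T+1}$, $x\in\mathbb{R}^{n_x}$ and $u=(u_0,\dots,u_{T-1})\in\mathbb{R}^{Tn_u}$, let $Y(\theta,x,u)=(C_{\theta_0}x_0,\dots,C_{\theta_T}x_T)$ with $x_0=x$, $x_{k+1}=A_{\theta_k}x_k+B_{\theta_k}u_k$. Two paths $\theta,\theta'\in W^{T+1}$ are discernible with respect to a control sequence $u\in\mathbb{R}^{Tn_u}$ if $Y(\theta,x,u)\neq Y(\theta',x',u)$ for all $x,x'\in\mathbb{R}^{n_x}$. For $N\in\mathbb{N}_+$ and $\alpha,\omega\in\mathbb{N}$ with $\alpha+\omega<N$, the system is called $(N,\alpha,\omega)$-mode observable if for all paths $\theta,\theta'\in W^{N+1}$ with $(\theta_\alpha,\dots,\theta_{N-\omega})\neq(\theta'_\alpha,\dots,\theta'_{N-\omega})$, the paths $\theta$ and $\theta'$ are discernible with respect to almost every control sequence $u\in\mathbb{R}^{Nn_u}$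 (i.e., all $u$ outside a set of Lebesgue measure zero). *)

theory Defs
  imports "HOL-Analysis.Analysis"
begin

text \<open>A mode path is a function nat => 'w (only indices 0..T matter),
  a control sequence is a function nat => real^'nu (only indices < T matter).\<close>

fun mjls_state ::
  "('w \<Rightarrow> real^'nx^'nx) \<Rightarrow> ('w \<Rightarrow> real^'nu^'nx) \<Rightarrow>
   (nat \<Rightarrow> 'w) \<Rightarrow> real^'nx \<Rightarrow> (nat \<Rightarrow> real^'nu) \<Rightarrow> nat \<Rightarrow> real^'nx" where
  "mjls_state A B \<theta> x u 0 = x"
| "mjls_state A B \<theta> x u (Suc k) =
     A (\<theta> k) *v mjls_state A B \<theta> x u k + B (\<theta> k) *v u k"

definition mjls_output ::
  "('w \<Rightarrow> real^'nx^'nx) \<Rightarrow> ('w \<Rightarrow> real^'nu^'nx) \<Rightarrow> ('w \<Rightarrow> real^'nx^'ny) \<Rightarrow> nat \<Rightarrow>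
   (nat \<Rightarrow> 'w) \<Rightarrow> real^'nx \<Rightarrow> (nat \<Rightarrow> real^'nu) \<Rightarrow> nat \<Rightarrow> real^'ny" where
  "mjls_output A B C T \<theta> x u =
     (\<lambda>k. if k \<le> T then C (\<theta> k) *v mjls_state A B \<theta> x u k else 0)"

definition discernible ::
  "('w \<Rightarrow> real^'nx^'nx) \<Rightarrow> ('w \<Rightarrow> real^'nu^'nx) \<Rightarrow> ('w \<Rightarrow> real^'nx^'ny) \<Rightarrow> nat \<Rightarrow>
   (nat \<Rightarrow> 'w) \<Rightarrow> (nat \<Rightarrow> 'w) \<Rightarrow> (nat \<Rightarrow> real^'nu) \<Rightarrow> bool" where
  "discernible A B C T \<theta> \<theta>' u \<longleftrightarrow>
     (\<forall>x x'. mjls_output A B C T \<theta> x u \<noteq> mjls_output A B C T \<theta>' x' u)"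

text \<open>(N,alpha,omega)-mode observability. Lebesgue measure on R^{N n_u} is the product of
  Lebesgue measures on the N copies of R^{n_u}.\<close>
definition mode_observable ::
  "('w \<Rightarrow> real^'nx^'nx) \<Rightarrow> ('w \<Rightarrow> real^'nu^'nx) \<Rightarrow> ('w \<Rightarrow> real^'nx^'ny) \<Rightarrow>
   nat \<Rightarrow> nat \<Rightarrow> nat \<Rightarrow> bool" where
  "mode_observable A B C N \<alpha> \<omega> \<longleftrightarrow>
     (\<forall>\<theta> \<theta>'. (\<exists>k. \<alpha> \<le> k \<and> k \<le> N - \<omega> \<and> \<theta> k \<noteq> \<theta>' k) \<longrightarrow>
        (AE u in PiM {..<N} (\<lambda>_. lborel). discernible A B C N \<theta> \<theta>' u))"

end

theory Submission
  imports Defs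
begin

lemma AE_pullback:
  assumes f: "f \<in> measurable M M'"
    and nul: "\<And>S. S \<in> null_sets M' \<Longrightarrow> f -` S \<inter> space M \<in> null_sets M"
    and ae: "AE y in M'. P y"
  shows "AE x in M. P (f x)"
proof -
  from ae obtain S where S: "{y \<in> space M'. \<not> P y} \<subseteq> S" "S \<in> null_sets M'"
    unfolding eventually_ae_filter by blast
  show ?thesis
  proof (rule AE_I')
    show "f -` S \<inter> space M \<in> null_sets M" using nul S(2) .
    show "{x \<in> space M. \<not> P (f x)} \<subseteq> f -` S \<inter> space M"
      using S(1) measurable_space[OF f] by auto
  qed
qed

lemma distr_reindex_sf:
  fixes M :: "'a measure"
  assumes sf: "sigma_finite_measure M" and t: "bij_betw t J K" and fin: "finite K"
  shows "distr (PiM K (\<lambda>_. M)) (PiM J (\<lambda>_. M)) (\<lambda>\<omega>. \<lambda>n\<in>J. \<omega> (t n)) = PiM J (\<lambda>_. M)"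
proof -
  interpret product_sigma_finite "\<lambda>_. M" by (simp add: product_sigma_finite_def sf)
  have inj: "inj_on t J" and img: "t ` J = K" using t by (auto simp: bij_betw_def)
  have finJ: "finite J" using fin inj img finite_imageD by blast
  have meas: "(\<lambda>\<omega>. \<lambda>n\<in>J. \<omega> (t n)) \<in> measurable (PiM K (\<lambda>_. M)) (PiM J (\<lambda>_. M))"
    by (rule measurable_restrict) (use img in auto)
  show ?thesis
  proof (rule PiM_eqI)
    show "finite J" by fact
    show "sets (distr (PiM K (\<lambda>_. M)) (PiM J (\<lambda>_. M)) (\<lambda>\<omega>. \<lambda>n\<in>J. \<omega> (t n))) = sets (PiM J (\<lambda>_. M))" by simp
    fix A assume A: "\<And>i. i \<in> J \<Longrightarrow> A i \<in> sets M"
    have pre: "(\<lambda>\<omega>. \<lambda>n\<in>J. \<omega> (t n)) -` Pi\<^sub>E J A \<inter> space (PiM K (\<lambda>_. M)) =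
        (\<Pi>\<^sub>E i\<in>K. A (the_inv_into J t i))"
    proof (intro set_eqI iffI)
      fix \<omega> assume w: "\<omega> \<in> (\<lambda>\<omega>. \<lambda>n\<in>J. \<omega> (t n)) -` Pi\<^sub>E J A \<inter> space (PiM K (\<lambda>_. M))"
      have w1: "\<And>n. n \<in> J \<Longrightarrow> \<omega> (t n) \<in> A n" using w by (auto simp: PiE_iff)
      have w2: "\<omega> \<in> extensional K" using w by (simp add: space_PiM PiE_iff)
      show "\<omega> \<in> (\<Pi>\<^sub>E i\<in>K. A (the_inv_into J t i))"
      proof (rule PiE_I)
        fix i assume i: "i \<in> K"
        then have j: "the_inv_into J t i \<in> J" using img inj by (metis the_inv_into_into subset_refl)
        have e: "t (the_inv_into J t i) = i" using i img inj f_the_inv_into_f by fastforce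
        show "\<omega> i \<in> A (the_inv_into J t i)" using w1[OF j] e by simp
      next
        fix i assume "i \<notin> K" then show "\<omega> i = undefined" using w2 by (simp add: extensional_def)
      qed
    next
      fix \<omega> assume w: "\<omega> \<in> (\<Pi>\<^sub>E i\<in>K. A (the_inv_into J t i))"
      have w1: "\<And>i. i \<in> K \<Longrightarrow> \<omega> i \<in> A (the_inv_into J t i)" and w2: "\<omega> \<in> extensional K"
        using w by (auto simp: PiE_iff)
      have "\<omega> i \<in> space M" if i: "i \<in> K" for i
      proof -
        have j: "the_inv_into J t i \<in> J" using i img inj by (metis the_inv_into_into subset_refl)
        show ?thesis using w1[OF i] sets.sets_into_space[OF A[OF j]] by blast
      qed
      then have "\<omega> \<in> space (PiM K (\<lambda>_. M))" using w2 unfolding space_PiM by (simp add: PiE_iff)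
      moreover have "\<omega> (t n) \<in> A n" if n: "n \<in> J" for n
        using w1[of "t n"] n img inj by (simp add: the_inv_into_f_f) blast
      then have "(\<lambda>n\<in>J. \<omega> (t n)) \<in> Pi\<^sub>E J A" by (simp add: PiE_iff)
      ultimately show "\<omega> \<in> (\<lambda>\<omega>. \<lambda>n\<in>J. \<omega> (t n)) -` Pi\<^sub>E J A \<inter> space (PiM K (\<lambda>_. M))" by simp
    qed
    have "emeasure (distr (PiM K (\<lambda>_. M)) (PiM J (\<lambda>_. M)) (\<lambda>\<omega>. \<lambda>n\<in>J. \<omega> (t n))) (Pi\<^sub>E J A)
       = emeasure (PiM K (\<lambda>_. M)) (\<Pi>\<^sub>E i\<in>K. A (the_inv_into J t i))"
      using A by (subst emeasure_distr[OF meas]) (auto intro!: sets_PiM_I_finite finJ simp: pre)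
    also have "\<dots> = (\<Prod>i\<in>K. emeasure M (A (the_inv_into J t i)))"
      using A inj img fin by (subst emeasure_PiM) (auto intro!: A simp: the_inv_into_into)
    also have "\<dots> = (\<Prod>i\<in>J. emeasure M (A i))"
      using inj img by (subst img[symmetric], subst prod.reindex) (auto simp: the_inv_into_f_f)
    finally show "emeasure (distr (PiM K (\<lambda>_. M)) (PiM J (\<lambda>_. M)) (\<lambda>\<omega>. \<lambda>n\<in>J. \<omega> (t n))) (Pi\<^sub>E J A)
       = (\<Prod>i\<in>J. emeasure M (A i))" .
  qed
qed

lemma null_restrict:
  fixes M :: "'a measure"
  assumes sf: "sigma_finite_measure M" and fin: "finite K" and sub: "K1 \<subseteq> K"
    and T: "T \<in> null_sets (PiM K1 (\<lambda>_. M))"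
  shows "(\<lambda>u. restrict u K1) -` T \<inter> space (PiM K (\<lambda>_. M)) \<in> null_sets (PiM K (\<lambda>_. M))"
proof -
  interpret product_sigma_finite "\<lambda>_. M" by (simp add: product_sigma_finite_def sf)
  define K2 where "K2 = K - K1"
  have KK: "K = K1 \<union> K2" and dis: "K1 \<inter> K2 = {}" using sub by (auto simp: K2_def)
  have f1: "finite K1" "finite K2" using fin sub by (auto simp: K2_def intro: finite_subset)
  interpret S2: sigma_finite_measure "PiM K2 (\<lambda>_. M)" using sigma_finite f1 by blast
  have D: "distr (PiM K1 (\<lambda>_. M) \<Otimes>\<^sub>M PiM K2 (\<lambda>_. M)) (PiM (K1 \<union> K2) (\<lambda>_. M)) (merge K1 K2) = PiM (K1 \<union> K2) (\<lambda>_. M)"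
    using distr_merge[OF dis f1] .
  have Ts: "T \<subseteq> space (PiM K1 (\<lambda>_. M))" using T null_setsD2 sets.sets_into_space by blast
  have R: "(\<lambda>u. restrict u K1) -` T \<inter> space (PiM K (\<lambda>_. M)) \<in> sets (PiM K (\<lambda>_. M))"
    using measurable_sets[OF measurable_restrict_subset[OF sub] null_setsD2[OF T]] .
  have pre: "merge K1 K2 -` ((\<lambda>u. restrict u K1) -` T \<inter> space (PiM K (\<lambda>_. M))) \<inter> space (PiM K1 (\<lambda>_. M) \<Otimes>\<^sub>M PiM K2 (\<lambda>_. M))
      = T \<times> space (PiM K2 (\<lambda>_. M))"
  proof (intro set_eqI iffI)
    fix p assume p: "p \<in> merge K1 K2 -` ((\<lambda>u. restrict u K1) -` T \<inter> space (PiM K (\<lambda>_. M))) \<inter> space (PiM K1 (\<lambda>_. M) \<Otimes>\<^sub>M PiM K2 (\<lambda>_. M))"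
    obtain x y where xy: "p = (x, y)" by force
    have x: "x \<in> space (PiM K1 (\<lambda>_. M))" and y: "y \<in> space (PiM K2 (\<lambda>_. M))"
      using p xy by (auto simp: space_pair_measure)
    have "restrict (merge K1 K2 (x, y)) K1 = x" using x
      by (auto simp: space_PiM PiE_iff extensional_def restrict_def merge_def fun_eq_iff)
    then show "p \<in> T \<times> space (PiM K2 (\<lambda>_. M))" using p xy y by auto
  next
    fix p assume p: "p \<in> T \<times> space (PiM K2 (\<lambda>_. M))"
    obtain x y where xy: "p = (x, y)" by force
    have x: "x \<in> space (PiM K1 (\<lambda>_. M))" and y: "y \<in> space (PiM K2 (\<lambda>_. M))" and xT: "x \<in> T"
      using p xy Ts by auto
    have "restrict (merge K1 K2 (x, y)) K1 = x" using x
      by (auto simp: space_PiM PiE_iff extensional_def restrict_def merge_def fun_eq_iff)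
    moreover have "merge K1 K2 (x, y) \<in> space (PiM K (\<lambda>_. M))"
      using measurable_space[OF measurable_merge[of K1 K2 "\<lambda>_. M"], of "(x,y)"] x y KK
      by (simp add: space_pair_measure)
    ultimately show "p \<in> merge K1 K2 -` ((\<lambda>u. restrict u K1) -` T \<inter> space (PiM K (\<lambda>_. M))) \<inter> space (PiM K1 (\<lambda>_. M) \<Otimes>\<^sub>M PiM K2 (\<lambda>_. M))"
      using xy x y xT by (simp add: space_pair_measure)
  qed
  have "T \<times> space (PiM K2 (\<lambda>_. M)) \<in> null_sets (PiM K1 (\<lambda>_. M) \<Otimes>\<^sub>M PiM K2 (\<lambda>_. M))"
    using S2.times_in_null_sets1[OF T] by simp
  then have N1: "merge K1 K2 -` ((\<lambda>u. restrict u K1) -` T \<inter> space (PiM K (\<lambda>_. M))) \<inter> space (PiM K1 (\<lambda>_. M) \<Otimes>\<^sub>M PiM K2 (\<lambda>_. M)) \<in> null_sets (PiM K1 (\<lambda>_. M) \<Otimes>\<^sub>M PiM K2 (\<lambda>_. M))"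
    by (simp only: pre)
  have mK: "merge K1 K2 \<in> measurable (PiM K1 (\<lambda>_. M) \<Otimes>\<^sub>M PiM K2 (\<lambda>_. M)) (PiM K (\<lambda>_. M))"
    using measurable_merge[of K1 K2 "\<lambda>_. M"] KK by simp
  have D': "distr (PiM K1 (\<lambda>_. M) \<Otimes>\<^sub>M PiM K2 (\<lambda>_. M)) (PiM K (\<lambda>_. M)) (merge K1 K2) = PiM K (\<lambda>_. M)"
    using D KK by simp
  have "(\<lambda>u. restrict u K1) -` T \<inter> space (PiM K (\<lambda>_. M)) \<in> null_sets (distr (PiM K1 (\<lambda>_. M) \<Otimes>\<^sub>M PiM K2 (\<lambda>_. M)) (PiM K (\<lambda>_. M)) (merge K1 K2))"
    using N1 R null_sets_distr_iff[OF mK] by blast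
  then show ?thesis using D' by simp
qed

lemma AE_reindex_sub:
  fixes M :: "'a measure"
  assumes sf: "sigma_finite_measure M" and fin: "finite K" and inj: "inj_on t J" and sub: "t ` J \<subseteq> K"
    and ae: "AE v in PiM J (\<lambda>_. M). P v"
  shows "AE u in PiM K (\<lambda>_. M). P (\<lambda>n\<in>J. u (t n))"
proof -
  have fin1: "finite (t ` J)" using fin sub finite_subset by blast
  have bij: "bij_betw t J (t ` J)" using inj by (simp add: bij_betw_def)
  let ?g = "\<lambda>\<omega>. \<lambda>n\<in>J. \<omega> (t n)"
  have gm: "?g \<in> measurable (PiM (t ` J) (\<lambda>_. M)) (PiM J (\<lambda>_. M))"
    by (rule measurable_restrict) auto
  have ae1: "AE w in PiM (t ` J) (\<lambda>_. M). P (?g w)"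
  proof (rule AE_pullback[OF gm _ ae])
    fix S assume S: "S \<in> null_sets (PiM J (\<lambda>_. M))"
    then have "S \<in> null_sets (distr (PiM (t ` J) (\<lambda>_. M)) (PiM J (\<lambda>_. M)) ?g)"
      using distr_reindex_sf[OF sf bij fin1] by simp
    then show "?g -` S \<inter> space (PiM (t ` J) (\<lambda>_. M)) \<in> null_sets (PiM (t ` J) (\<lambda>_. M))"
      using null_sets_distr_iff[OF gm] by blast
  qed
  have ae2: "AE u in PiM K (\<lambda>_. M). P (?g (restrict u (t ` J)))"
    by (rule AE_pullback[OF measurable_restrict_subset[OF sub] _ ae1])
       (rule null_restrict[OF sf fin sub])
  have eq: "?g (restrict u (t ` J)) = ?g u" for u by (auto simp: restrict_def)
  show ?thesis using ae2 by (rule eventually_mono) (metis eq)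
qed

lemma state_cong:
  "(\<And>j. j < k \<Longrightarrow> u j = u' j) \<Longrightarrow> mjls_state A B \<theta> x u k = mjls_state A B \<theta> x u' k"
  by (induction k) auto

lemma state_shift:
  "mjls_state A B (\<lambda>n. \<theta> (Suc n)) (A (\<theta> 0) *v x + B (\<theta> 0) *v u 0) (\<lambda>n. u (Suc n)) k
   = mjls_state A B \<theta> x u (Suc k)"
  by (induction k) auto

lemma sf_lborel: "sigma_finite_measure (lborel :: ('a::euclidean_space) measure)"
  by (rule lborel.sigma_finite_measure_axioms)

theorem lemma3:
  fixes A :: "'w::finite \<Rightarrow> real^'nx^'nx"
    and B :: "'w \<Rightarrow> real^'nu^'nx"
    and C :: "'w \<Rightarrow> real^'nx^'ny"
    and N \<alpha> \<omega> :: nat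
  assumes "0 < N" and "\<alpha> + \<omega> < N"
    and "mode_observable A B C N \<alpha> \<omega>"
  shows "mode_observable A B C (N + 1) \<alpha> \<omega>"
  unfolding mode_observable_def
proof (intro allI impI)
  fix \<theta> \<theta>' :: "nat \<Rightarrow> 'w"
  assume "\<exists>k. \<alpha> \<le> k \<and> k \<le> N + 1 - \<omega> \<and> \<theta> k \<noteq> \<theta>' k"
  then obtain k where k: "\<alpha> \<le> k" "k \<le> N + 1 - \<omega>" "\<theta> k \<noteq> \<theta>' k" by blast
  have hyp: "\<And>\<theta> \<theta>'. (\<exists>k. \<alpha> \<le> k \<and> k \<le> N - \<omega> \<and> \<theta> k \<noteq> \<theta>' k) \<Longrightarrow>
        (AE u in PiM {..<N} (\<lambda>_. lborel). discernible A B C N \<theta> \<theta>' u)"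
    using assms(3) unfolding mode_observable_def by blast
  show "AE u in PiM {..<N+1} (\<lambda>_. lborel). discernible A B C (N+1) \<theta> \<theta>' u"
  proof (cases "k \<le> N - \<omega>")
    case True
    have ae: "AE v in PiM {..<N} (\<lambda>_. lborel). discernible A B C N \<theta> \<theta>' v"
      using hyp k True by blast
    have ae2: "AE u in PiM {..<N+1} (\<lambda>_. lborel). discernible A B C N \<theta> \<theta>' (\<lambda>n\<in>{..<N}. u (id n))"
      by (rule AE_reindex_sub[OF sf_lborel _ _ _ ae]) auto
    show ?thesis using ae2
    proof (rule eventually_mono)
      fix u :: "nat \<Rightarrow> real^'nu"
      let ?v = "\<lambda>n\<in>{..<N}. u (id n)"
      assume d: "discernible A B C N \<theta> \<theta>' ?v"
      show "discernible A B C (N+1) \<theta> \<theta>' u"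
        unfolding discernible_def
      proof (intro allI notI)
        fix x x' assume eq: "mjls_output A B C (N + 1) \<theta> x u = mjls_output A B C (N + 1) \<theta>' x' u"
        have "mjls_output A B C N \<theta> x ?v = mjls_output A B C N \<theta>' x' ?v"
        proof
          fix j show "mjls_output A B C N \<theta> x ?v j = mjls_output A B C N \<theta>' x' ?v j"
          proof (cases "j \<le> N")
            case True
            have "mjls_state A B \<theta> x ?v j = mjls_state A B \<theta> x u j"
                 "mjls_state A B \<theta>' x' ?v j = mjls_state A B \<theta>' x' u j"
              using True by (auto intro!: state_cong)
            moreover have "C (\<theta> j) *v mjls_state A B \<theta> x u j = C (\<theta>' j) *v mjls_state A B \<theta>' x' u j"
              using fun_cong[OF eq, of j] True by (simp add: mjls_output_def)
            ultimately show ?thesis using True by (simp add: mjls_output_def)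
          qed (simp add: mjls_output_def)
        qed
        then show False using d unfolding discernible_def by blast
      qed
    qed
  next
    case False
    let ?s = "\<lambda>n. \<theta> (Suc n)" and ?s' = "\<lambda>n. \<theta>' (Suc n)"
    have k1: "k = Suc (k - 1)" using False k assms by linarith
    have "\<alpha> \<le> k - 1 \<and> k - 1 \<le> N - \<omega> \<and> ?s (k - 1) \<noteq> ?s' (k - 1)"
    proof (intro conjI)
      show "\<alpha> \<le> k - 1" using False assms(2) by linarith
      show "k - 1 \<le> N - \<omega>" using k(2) assms(2) by linarith
      show "?s (k - 1) \<noteq> ?s' (k - 1)" using k(3) k1 by simp
    qed
    then have ae: "AE v in PiM {..<N} (\<lambda>_. lborel). discernible A B C N ?s ?s' v"
      by (intro hyp[of ?s ?s']) blast
    have ae2: "AE u in PiM {..<N+1} (\<lambda>_. lborel). discernible A B C N ?s ?s' (\<lambda>n\<in>{..<N}. u (Suc n))"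
      by (rule AE_reindex_sub[OF sf_lborel _ _ _ ae]) auto
    show ?thesis using ae2
    proof (rule eventually_mono)
      fix u :: "nat \<Rightarrow> real^'nu"
      let ?v = "\<lambda>n\<in>{..<N}. u (Suc n)"
      assume d: "discernible A B C N ?s ?s' ?v"
      show "discernible A B C (N+1) \<theta> \<theta>' u"
        unfolding discernible_def
      proof (intro allI notI)
        fix x x' assume eq: "mjls_output A B C (N + 1) \<theta> x u = mjls_output A B C (N + 1) \<theta>' x' u"
        define x1 where "x1 = A (\<theta> 0) *v x + B (\<theta> 0) *v u 0"
        define x1' where "x1' = A (\<theta>' 0) *v x' + B (\<theta>' 0) *v u 0"
        have "mjls_output A B C N ?s x1 ?v = mjls_output A B C N ?s' x1' ?v"
        proof
          fix j show "mjls_output A B C N ?s x1 ?v j = mjls_output A B C N ?s' x1' ?v j"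
          proof (cases "j \<le> N")
            case True
            have "mjls_state A B ?s x1 ?v j = mjls_state A B ?s x1 (\<lambda>n. u (Suc n)) j"
                 "mjls_state A B ?s' x1' ?v j = mjls_state A B ?s' x1' (\<lambda>n. u (Suc n)) j"
              using True by (auto intro!: state_cong)
            moreover have "mjls_state A B ?s x1 (\<lambda>n. u (Suc n)) j = mjls_state A B \<theta> x u (Suc j)"
                 "mjls_state A B ?s' x1' (\<lambda>n. u (Suc n)) j = mjls_state A B \<theta>' x' u (Suc j)"
              unfolding x1_def x1'_def by (rule state_shift)+
            moreover have "C (\<theta> (Suc j)) *v mjls_state A B \<theta> x u (Suc j) = C (\<theta>' (Suc j)) *v mjls_state A B \<theta>' x' u (Suc j)"
              using fun_cong[OF eq, of "Suc j"] True by (simp add: mjls_output_def)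
            ultimately show ?thesis using True by (simp add: mjls_output_def)
          qed (simp add: mjls_output_def)
        qed
        then show False using d unfolding discernible_def by blast
      qed
    qed
  qed
qed

end
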